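(* Let $p,q\in\mathbb{C}$, $N=N_1+N_2+\dots+N_s$, and let $$\Gamma=\mathrm{Diag}\big(\Gamma^{[N_1]}_D(k_1,\dots,k_{N_1}),\ \Gamma^{[N_2]}_J(\kappa_2),\ \dots,\ \Gamma^{[N_s]}_J(\kappa_s)\big)$$ (block diagonal), where all eigenvalues $\lambda,\mu$ of $\Gamma$ satisfy $\lambda+\mu\ne0$ and $p,q\notin\{\pm\lambda\}$. Let $c=(c^{(1)},c^{(2)},\dots,c^{(s)})$ be a constant row vector of length $N$, with $c^{(1)}=(c_1,\dots,c_{N_1})$ and $c^{(j)}$ of length $N_j$. Define $$r=\begin{pmatrix} r^{[N_1]}_D(k_1,\dots,k_{N_1})\\ r^{[N_2]}_J(\kappa_2)\\ \vdots\\ r^{[N_s]}_J(\kappa_s)\end{pmatrix},\qquad M=FGH,$$ with $F=\mathrm{Diag}(F^{[N_1]}_D(k_1,\dots,k_{N_1}),F^{[N_2]}_J(\kappa_2),\dots,F^{[N_s]}_J(\kappa_s))$, $H=\mathrm{Diag}(H^{[N_1]}_D(c^{(1)}),H^{[N_2]}_J(c^{(2)}),\dots,H^{[N_s]}_J(c^{(s)}))$, and $G=(G_{i,j})_{i,j=1}^s$ the symmetric block matrix with $N_i\times N_j$ blocks $$G_{1,1}=G^{[N_1]}_D(k_1,\dots,k_{N_1}),\quad G_{1,j}=G_{j,1}^T=G^{[N_1,N_j]}_{DJ}(k_1,\dots,k_{N_1};\kappa_j)\ (1<j\le s),$$ $$G_{i,j}=G_{j,i}^T=G^{[N_i,N_j]}_{JJ}(\kappa_i;\kappa_j)\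 (1<i\le j\le s).$$ Then, for all $(n,m)\in\mathbb{Z}^2$, $$(pI-\Gamma)\tilde r=(pI+\Gamma)r,\qquad (qI-\Gamma)\hat r=(qI+\Gamma)r,\qquad M\Gamma+\Gamma M=r\,c .$$ Furthermore, for $\mathcal{A}=\mathrm{Diag}(I_{N_1},\mathcal{A}_2,\dots,\mathcal{A}_s)$ with each $\mathcal{A}_j$ an arbitrary constant $N_j\times N_j$ lower triangular Toeplitz matrix, the pair $(\mathcal{A}r,\mathcal{A}M)$ also satisfies these three equations with the same $\Gamma$ and $c$.
   Context: For $f$ on $\mathbb{Z}^2$: $\tilde f(n,m)=f(n+1,m)$, $\hat f(n,m)=f(n,m+1)$. Plane wave factor: $\rho(k)=\big(\tfrac{p+k}{p-k}\big)^n\big(\tfrac{q+k}{q-k}\big)^m\rho^0$, with the constant $\rho^0$ allowed to depend on which eigenvalue/position it is attached to but not on $k$ under differentiation; write $\rho_i=\rho(k_i)$. $\Gamma^{[N_1]}_D(k_1,\dots,k_{N_1})=\mathrm{Diag}(k_1,\dots,k_{N_1})$; $r^{[N_1]}_D=(\rho_1,\dots,\rho_{N_1})^T$; $F^{[N_1]}_D=\mathrm{Diag}(\rho_1,\dots,\rho_{N_1})$; $H^{[N_1]}_D(c_1,\dots,c_{N_1})=\mathrm{Diag}(c_1,\dots,c_{N_1})$. $\Gamma^{[N]}_J(\kappa)$: $N\times N$ with $\kappa$ on the diagonal, $1$ on the subdiagonal, $0$ elsewhere. $r^{[N]}_J(\kappa)=\big(\rho,\frac{\partial_k\rho}{1!},\dots,\frac{\partial_k^{N-1}\rho}{(N-1)!}\big)^T|_{k=\kappa}$.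 $F^{[N]}_J(\kappa)$: lower triangular with $(i,j)$ entry $\frac{1}{(i-j)!}\partial_k^{i-j}\rho|_{k=\kappa}$ for $i\ge j$. $H^{[N]}_J(d_1,\dots,d_N)$: $(i,j)$ entry $d_{i+j-1}$ if $i+j-1\le N$, else $0$. $G^{[N]}_D(k_1,\dots,k_N)$: $(i,j)$ entry $\frac1{k_i+k_j}$. $G^{[N_1,N_2]}_{DJ}(k_1,\dots,k_{N_1};b)$: $N_1\times N_2$, $(i,j)$ entry $-\big(\frac{-1}{k_i+b}\big)^j$. $G^{[N_1,N_2]}_{JJ}(a;b)$: $N_1\times N_2$, $(i,j)$ entry $\binom{i+j-2}{i-1}\frac{(-1)^{i+j}}{(a+b)^{i+j-1}}$. A lower triangular Toeplitz matrix is $(a_{i-j})$ with $a_l=0$ for $l<0$. The block sizes $N_1\ge0$, $N_j\ge1$; empty blocks are omitted. *)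

theory Defs
  imports "HOL-Analysis.Analysis"
begin

text \<open>Matrices are functions nat => nat => complex with an explicit size N
  (indices 0..N-1); vectors are functions nat => complex.
  Block structure: block sizes list L = N1 # Ns, block 0 is the diagonal block
  (size N1, possibly 0), blocks b = 1..length Ns are Jordan blocks of size Ns!(b-1).\<close>

definition mmul :: "nat \<Rightarrow> (nat \<Rightarrow> nat \<Rightarrow> complex) \<Rightarrow> (nat \<Rightarrow> nat \<Rightarrow> complex) \<Rightarrow> nat \<Rightarrow> nat \<Rightarrow> complex" where
  "mmul N A B i j = (\<Sum>l<N. A i l * B l j)"

definition mvec :: "nat \<Rightarrow> (nat \<Rightarrow> nat \<Rightarrow> complex) \<Rightarrow> (nat \<Rightarrow> complex) \<Rightarrow> nat \<Rightarrow> complex" where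
  "mvec N A v i = (\<Sum>l<N. A i l * v l)"

definition idm :: "nat \<Rightarrow> nat \<Rightarrow> complex" where
  "idm i j = (if i = j then 1 else 0)"

definition is_eigenvalue :: "nat \<Rightarrow> (nat \<Rightarrow> nat \<Rightarrow> complex) \<Rightarrow> complex \<Rightarrow> bool" where
  "is_eigenvalue N A lam \<longleftrightarrow>
     (\<exists>v. (\<exists>i<N. v i \<noteq> 0) \<and> (\<forall>i<N. mvec N A v i = lam * v i))"

definition blk :: "nat list \<Rightarrow> nat \<Rightarrow> nat" where
  "blk L i = (LEAST b. i < sum_list (take (Suc b) L))"

definition off :: "nat list \<Rightarrow> nat \<Rightarrow> nat" where
  "off L b = sum_list (take b L)"

definition loc :: "nat list \<Rightarrow> nat \<Rightarrow> nat" where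
  "loc L i = i - off L (blk L i)"

definition rho :: "complex \<Rightarrow> complex \<Rightarrow> int \<Rightarrow> int \<Rightarrow> complex \<Rightarrow> complex \<Rightarrow> complex" where
  "rho p q n m r0 z = ((p + z) / (p - z)) powi n * ((q + z) / (q - z)) powi m * r0"

definition dk :: "nat \<Rightarrow> (complex \<Rightarrow> complex) \<Rightarrow> complex \<Rightarrow> complex" where
  "dk j f z = (deriv ^^ j) f z"

definition Gam :: "nat \<Rightarrow> (nat \<Rightarrow> complex) \<Rightarrow> nat list \<Rightarrow> (nat \<Rightarrow> complex) \<Rightarrow> nat \<Rightarrow> nat \<Rightarrow> complex" where
  "Gam N1 k Ns kap i j =
    (let L = N1 # Ns; bi = blk L i; bj = blk L j; a = loc L i; b = loc L j in
     if bi \<noteq> bj then 0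
     else if bi = 0 then (if a = b then k a else 0)
     else if a = b then kap bi else if a = b + 1 then 1 else 0)"

definition rvec :: "complex \<Rightarrow> complex \<Rightarrow> nat \<Rightarrow> (nat \<Rightarrow> complex) \<Rightarrow> (nat \<Rightarrow> complex)
    \<Rightarrow> nat list \<Rightarrow> (nat \<Rightarrow> complex) \<Rightarrow> (nat \<Rightarrow> complex) \<Rightarrow> int \<Rightarrow> int \<Rightarrow> nat \<Rightarrow> complex" where
  "rvec p q N1 k r0D Ns kap r0J n m i =
    (let L = N1 # Ns; bi = blk L i; a = loc L i in
     if bi = 0 then rho p q n m (r0D a) (k a)
     else dk a (rho p q n m (r0J bi)) (kap bi) / fact a)"

definition Fmat :: "complex \<Rightarrow> complex \<Rightarrow> nat \<Rightarrow> (nat \<Rightarrow> complex) \<Rightarrow> (nat \<Rightarrow> complex)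
    \<Rightarrow> nat list \<Rightarrow> (nat \<Rightarrow> complex) \<Rightarrow> (nat \<Rightarrow> complex) \<Rightarrow> int \<Rightarrow> int \<Rightarrow> nat \<Rightarrow> nat \<Rightarrow> complex" where
  "Fmat p q N1 k r0D Ns kap r0J n m i j =
    (let L = N1 # Ns; bi = blk L i; bj = blk L j; a = loc L i; b = loc L j in
     if bi \<noteq> bj then 0
     else if bi = 0 then (if a = b then rho p q n m (r0D a) (k a) else 0)
     else if b \<le> a then dk (a - b) (rho p q n m (r0J bi)) (kap bi) / fact (a - b)
     else 0)"

text \<open>c is the global row vector (c^(1),...,c^(s)), indexed 0..N-1\<close>
definition Hmat :: "nat \<Rightarrow> nat list \<Rightarrow> (nat \<Rightarrow> complex) \<Rightarrow> nat \<Rightarrow> nat \<Rightarrow> complex" where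
  "Hmat N1 Ns c i j =
    (let L = N1 # Ns; bi = blk L i; bj = blk L j; a = loc L i; b = loc L j in
     if bi \<noteq> bj then 0
     else if bi = 0 then (if a = b then c i else 0)
     else if a + b < L ! bi then c (off L bi + a + b) else 0)"

definition Gmat :: "nat \<Rightarrow> (nat \<Rightarrow> complex) \<Rightarrow> nat list \<Rightarrow> (nat \<Rightarrow> complex) \<Rightarrow> nat \<Rightarrow> nat \<Rightarrow> complex" where
  "Gmat N1 k Ns kap i j =
    (let L = N1 # Ns; bi = blk L i; bj = blk L j; a = loc L i; b = loc L j in
     if bi = 0 \<and> bj = 0 then 1 / (k a + k b)
     else if bi = 0 then - ((- 1 / (k a + kap bj)) ^ (b + 1))
     else if bj = 0 then - ((- 1 / (k b + kap bi)) ^ (a + 1))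
     else of_nat ((a + b) choose a) * (- 1) ^ (a + b) / (kap bi + kap bj) ^ (a + b + 1))"

definition Mmat :: "complex \<Rightarrow> complex \<Rightarrow> nat \<Rightarrow> (nat \<Rightarrow> complex) \<Rightarrow> (nat \<Rightarrow> complex)
    \<Rightarrow> nat list \<Rightarrow> (nat \<Rightarrow> complex) \<Rightarrow> (nat \<Rightarrow> complex) \<Rightarrow> (nat \<Rightarrow> complex) \<Rightarrow> int \<Rightarrow> int \<Rightarrow> nat \<Rightarrow> nat \<Rightarrow> complex" where
  "Mmat p q N1 k r0D Ns kap r0J c n m =
    (let N = sum_list (N1 # Ns) in
     mmul N (mmul N (Fmat p q N1 k r0D Ns kap r0J n m) (Gmat N1 k Ns kap)) (Hmat N1 Ns c))"

text \<open>A = Diag(I_{N1}, A_2, ..., A_s), A_b lower triangular Toeplitz with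
  entries aseq b 0, aseq b 1, ... (constant, i.e. independent of n, m)\<close>
definition Amat :: "nat \<Rightarrow> nat list \<Rightarrow> (nat \<Rightarrow> nat \<Rightarrow> complex) \<Rightarrow> nat \<Rightarrow> nat \<Rightarrow> complex" where
  "Amat N1 Ns aseq i j =
    (let L = N1 # Ns; bi = blk L i; bj = blk L j; a = loc L i; b = loc L j in
     if bi \<noteq> bj then 0
     else if bi = 0 then (if a = b then 1 else 0)
     else if b \<le> a then aseq bi (a - b) else 0)"

definition sat_eqs :: "nat \<Rightarrow> complex \<Rightarrow> complex \<Rightarrow> (nat \<Rightarrow> nat \<Rightarrow> complex) \<Rightarrow> (nat \<Rightarrow> complex)
    \<Rightarrow> (int \<Rightarrow> int \<Rightarrow> nat \<Rightarrow> complex) \<Rightarrow> (int \<Rightarrow> int \<Rightarrow> nat \<Rightarrow> nat \<Rightarrow> complex) \<Rightarrow> bool" where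
  "sat_eqs N p q G c r M \<longleftrightarrow>
    (\<forall>n m.
      (\<forall>i<N. mvec N (\<lambda>i j. p * idm i j - G i j) (r (n + 1) m) i
              = mvec N (\<lambda>i j. p * idm i j + G i j) (r n m) i) \<and>
      (\<forall>i<N. mvec N (\<lambda>i j. q * idm i j - G i j) (r n (m + 1)) i
              = mvec N (\<lambda>i j. q * idm i j + G i j) (r n m) i) \<and>
      (\<forall>i<N. \<forall>j<N. mmul N (M n m) G i j + mmul N G (M n m) i j = r n m i * c j))"

end

theory Submission
  imports Defs
begin


lemma off_Suc: "b < length L \<Longrightarrow> off L (Suc b) = off L b + L!b"
  by (simp add: off_def take_Suc_conv_app_nth)

lemma off_mono: "b \<le> b' \<Longrightarrow> off L b \<le> off L b'"
proof -
  assume "b \<le> b'"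
  then obtain d where "b' = b + d" using le_Suc_ex by blast
  thus ?thesis by (simp add: off_def take_add)
qed

lemma off_len: "off L (length L) = sum_list L" by (simp add: off_def)

lemma blk_props:
  assumes "i < sum_list L"
  shows "blk L i < length L \<and> off L (blk L i) \<le> i \<and> i < off L (blk L i) + L ! blk L i"
proof -
  have ex: "i < sum_list (take (Suc (length L - 1)) L)"
    using assms by (cases L) auto
  have le: "blk L i \<le> length L - 1" unfolding blk_def by (rule Least_le[where P="\<lambda>b. i < sum_list (take (Suc b) L)", OF ex])
  have sat: "i < sum_list (take (Suc (blk L i)) L)" unfolding blk_def by (rule LeastI[where P="\<lambda>b. i < sum_list (take (Suc b) L)", OF ex])
  have lt: "blk L i < length L" using le assms by (cases L) auto
  have off1: "off L (blk L i) \<le> i"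
  proof (cases "blk L i")
    case 0 then show ?thesis by (simp add: off_def)
  next
    case (Suc b)
    have "\<not> i < sum_list (take (Suc b) L)"
      using not_less_Least[of b "\<lambda>b. i < sum_list (take (Suc b) L)"] Suc unfolding blk_def by auto
    then show ?thesis using Suc by (simp add: off_def)
  qed
  show ?thesis using lt off1 sat off_Suc[OF lt] by (simp add: off_def)
qed

lemma blk_eq:
  assumes "b < length L" "off L b \<le> i" "i < off L b + L!b"
  shows "blk L i = b"
proof -
  have sat: "i < sum_list (take (Suc b) L)" using assms off_Suc[of b L] by (simp add: off_def)
  have "\<forall>b'<b. \<not> i < sum_list (take (Suc b') L)"
  proof (intro allI impI)
    fix b' assume "b' < b"
    then have "off L (Suc b') \<le> off L b" by (intro off_mono) simp
    then show "\<not> i < sum_list (take (Suc b') L)" using assms by (simp add: off_def)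
  qed
  then show ?thesis unfolding blk_def
    by (metis (mono_tags, lifting) sat Least_equality not_less)
qed

lemma idx: "i < sum_list L \<Longrightarrow> i = off L (blk L i) + loc L i \<and> loc L i < L ! blk L i"
  using blk_props[of i L] by (auto simp: loc_def)

lemma off_le_sum: "b < length L \<Longrightarrow> off L b + L!b \<le> sum_list L"
  using off_mono[of "Suc b" "length L" L] off_Suc[of b L] off_len[of L] by simp

lemma nb_prev: "i < sum_list L \<Longrightarrow> 1 \<le> loc L i \<Longrightarrow> blk L (i-1) = blk L i \<and> loc L (i-1) = loc L i - 1"
proof -
  assume a: "i < sum_list L" "1 \<le> loc L i"
  have b: "blk L (i - 1) = blk L i"
    using blk_props[OF a(1)] a(2) idx[OF a(1)] by (intro blk_eq) auto
  then show ?thesis using idx[OF a(1)] by (auto simp: loc_def)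
qed

lemma nb_next: "i < sum_list L \<Longrightarrow> loc L i + 1 < L ! blk L i \<Longrightarrow>
   i + 1 < sum_list L \<and> blk L (i+1) = blk L i \<and> loc L (i+1) = loc L i + 1"
proof -
  assume a: "i < sum_list L" "loc L i + 1 < L ! blk L i"
  have lt: "i + 1 < sum_list L" using idx[OF a(1)] a(2) off_le_sum[of "blk L i" L] blk_props[OF a(1)] by linarith
  have b: "blk L (i + 1) = blk L i"
    using blk_props[OF a(1)] a(2) idx[OF a(1)] by (intro blk_eq) auto
  then show ?thesis using idx[OF a(1)] lt by (auto simp: loc_def)
qed

lemma same_blk:
  assumes "i < sum_list L" "j < sum_list L" "blk L i = blk L j"
  shows "(i = j \<longleftrightarrow> loc L i = loc L j) \<and> (i = j + 1 \<longleftrightarrow> loc L i = loc L j + 1)"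
proof -
  have h1: "i = off L (blk L i) + loc L i" using idx[OF assms(1)] by blast
  have h2: "j = off L (blk L i) + loc L j" using idx[OF assms(2)] assms(3) by simp
  show ?thesis using h1 h2 by arith
qed

definition gd :: "nat \<Rightarrow> (nat \<Rightarrow> complex) \<Rightarrow> nat list \<Rightarrow> (nat \<Rightarrow> complex) \<Rightarrow> nat \<Rightarrow> complex" where
  "gd N1 k Ns kap i = (if blk (N1#Ns) i = 0 then k (loc (N1#Ns) i) else kap (blk (N1#Ns) i))"

lemma Gam_row:
  assumes "i < sum_list (N1#Ns)" "l < sum_list (N1#Ns)"
  shows "Gam N1 k Ns kap i l = (if l = i then gd N1 k Ns kap i
     else if blk (N1#Ns) i \<noteq> 0 \<and> 1 \<le> loc (N1#Ns) i \<and> l = i - 1 then 1 else 0)"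
proof -
  let ?L = "N1#Ns"
  show ?thesis
  proof (cases "blk ?L i = blk ?L l")
    case True
    have E: "(i = l \<longleftrightarrow> loc ?L i = loc ?L l) \<and> (i = l + 1 \<longleftrightarrow> loc ?L i = loc ?L l + 1)" using same_blk[OF assms True] .
    have F: "1 \<le> loc ?L i \<Longrightarrow> 1 \<le> i" using idx[OF assms(1)] by linarith
    have G: "(1 \<le> loc ?L i \<and> l = i - 1) \<longleftrightarrow> loc ?L i = loc ?L l + 1" using E F by auto
    show ?thesis
    proof (cases "l = i")
      case True then show ?thesis by (simp add: Gam_def gd_def Let_def)
    next
      case False
      then have "loc ?L i \<noteq> loc ?L l" using E by auto
      then show ?thesis using False True G unfolding Gam_def gd_def Let_def by auto
    qed
  next
    case False
    have "\<not> (1 \<le> loc ?L i \<and> l = i - 1)" using nb_prev[OF assms(1)] False by auto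
    then show ?thesis using False by (auto simp: Gam_def gd_def Let_def)
  qed
qed

lemma Gam_col:
  assumes "j < sum_list (N1#Ns)" "l < sum_list (N1#Ns)"
  shows "Gam N1 k Ns kap l j = (if l = j then gd N1 k Ns kap j
     else if blk (N1#Ns) j \<noteq> 0 \<and> loc (N1#Ns) j + 1 < (N1#Ns) ! blk (N1#Ns) j \<and> l = j + 1 then 1 else 0)"
proof -
  let ?L = "N1#Ns"
  show ?thesis
  proof (cases "blk ?L j = blk ?L l")
    case True
    have E: "(l = j \<longleftrightarrow> loc ?L l = loc ?L j) \<and> (l = j + 1 \<longleftrightarrow> loc ?L l = loc ?L j + 1)"
      using same_blk[OF assms(2,1)] True by simp
    have F: "loc ?L l < ?L ! blk ?L j" using idx[OF assms(2)] True by simp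
    have G: "(loc ?L j + 1 < ?L ! blk ?L j \<and> l = j + 1) \<longleftrightarrow> loc ?L l = loc ?L j + 1" using E F by auto
    show ?thesis
    proof (cases "l = j")
      case True then show ?thesis by (simp add: Gam_def gd_def Let_def)
    next
      case False
      then have "loc ?L l \<noteq> loc ?L j" using E by auto
      then show ?thesis using False True G unfolding Gam_def gd_def Let_def by auto
    qed
  next
    case False
    have "\<not> (loc ?L j + 1 < ?L ! blk ?L j \<and> l = j + 1)" using nb_next[OF assms(1)] False by auto
    then show ?thesis using False by (auto simp: Gam_def gd_def Let_def)
  qed
qed

lemma sum_two:
  fixes a b :: complex and i j N :: nat
  assumes "i < N"
  shows "(\<Sum>l<N. (if l = i then a else if P \<and> l = j then b else 0) * v l) = a * v i + (if P \<and> j < N \<and> j \<noteq> i then b * v j else 0)"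
proof -
  have "(\<Sum>l<N. (if l = i then a else if P \<and> l = j then b else 0) * v l)
     = (\<Sum>l<N. (if l = i then a * v i else 0) + (if l = j then (if P \<and> j \<noteq> i then b * v j else 0) else 0))"
    by (rule sum.cong) auto
  also have "\<dots> = a * v i + (if P \<and> j < N \<and> j \<noteq> i then b * v j else 0)"
    using assms by (simp add: sum.distrib sum.delta)
  finally show ?thesis .
qed

lemma Gam_row_sum:
  assumes "i < sum_list (N1#Ns)"
  shows "(\<Sum>l<sum_list (N1#Ns). Gam N1 k Ns kap i l * v l) = gd N1 k Ns kap i * v i
     + (if blk (N1#Ns) i \<noteq> 0 \<and> 1 \<le> loc (N1#Ns) i then v (i - 1) else 0)"
proof -
  have "(\<Sum>l<sum_list (N1#Ns). Gam N1 k Ns kap i l * v l) = (\<Sum>l<sum_list (N1#Ns). (if l = i then gd N1 k Ns kap i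
     else if (blk (N1#Ns) i \<noteq> 0 \<and> 1 \<le> loc (N1#Ns) i) \<and> l = i - 1 then 1 else 0) * v l)"
    by (rule sum.cong[OF refl]) (simp add: Gam_row[OF assms])
  also have "\<dots> = gd N1 k Ns kap i * v i
     + (if blk (N1#Ns) i \<noteq> 0 \<and> 1 \<le> loc (N1#Ns) i then v (i - 1) else 0)"
    using idx[OF assms] assms by (subst sum_two) auto
  finally show ?thesis .
qed

lemma Gam_col_sum:
  assumes "j < sum_list (N1#Ns)"
  shows "(\<Sum>l<sum_list (N1#Ns). Gam N1 k Ns kap l j * v l) = gd N1 k Ns kap j * v j
     + (if blk (N1#Ns) j \<noteq> 0 \<and> loc (N1#Ns) j + 1 < (N1#Ns) ! blk (N1#Ns) j then v (j + 1) else 0)"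
proof -
  have "(\<Sum>l<sum_list (N1#Ns). Gam N1 k Ns kap l j * v l) = (\<Sum>l<sum_list (N1#Ns). (if l = j then gd N1 k Ns kap j
     else if (blk (N1#Ns) j \<noteq> 0 \<and> loc (N1#Ns) j + 1 < (N1#Ns) ! blk (N1#Ns) j) \<and> l = j + 1 then 1 else 0) * v l)"
    by (rule sum.cong[OF refl]) (simp add: Gam_col[OF assms])
  also have "\<dots> = gd N1 k Ns kap j * v j
     + (if blk (N1#Ns) j \<noteq> 0 \<and> loc (N1#Ns) j + 1 < (N1#Ns) ! blk (N1#Ns) j then v (j + 1) else 0)"
    using nb_next[OF assms] by (subst sum_two[OF assms]) auto
  finally show ?thesis .
qed



lemma fps_exp_power: "(f :: complex \<Rightarrow> complex) has_fps_expansion F \<Longrightarrow> (\<lambda>x. f x ^ n) has_fps_expansion F ^ n"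
proof (induction n)
  case 0 then show ?case by simp
next
  case (Suc n)
  have "(\<lambda>x. f x * f x ^ n) has_fps_expansion F * F ^ n"
    by (rule has_fps_expansion_mult[OF Suc.prems Suc.IH[OF Suc.prems]])
  then show ?case by simp
qed

lemma fps_exp_nth0: "f has_fps_expansion F \<Longrightarrow> fps_nth F 0 = f 0"
  by (auto simp: has_fps_expansion_def eval_fps_at_0 dest: eventually_nhds_x_imp_x)

lemma fps_exp_powi:
  fixes f :: "complex \<Rightarrow> complex"
  assumes "f has_fps_expansion F" "f 0 \<noteq> 0"
  shows "\<exists>G. (\<lambda>x. f x powi n) has_fps_expansion G"
proof (cases "0 \<le> n")
  case True
  then have "(\<lambda>x. f x powi n) = (\<lambda>x. f x ^ nat n)" by (simp add: power_int_def)
  then show ?thesis using fps_exp_power[OF assms(1)] by metis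
next
  case False
  have inv: "(\<lambda>x. inverse (f x)) has_fps_expansion inverse F"
    using assms fps_exp_nth0[OF assms(1)] by (intro has_fps_expansion_inverse) auto
  have "(\<lambda>x. f x powi n) = (\<lambda>x. inverse (f x) ^ nat (-n))" using False by (simp add: power_int_def)
  then show ?thesis using fps_exp_power[OF inv] by metis
qed

lemma rho_exp:
  assumes "\<kappa> \<noteq> p" "\<kappa> \<noteq> -p" "\<kappa> \<noteq> q" "\<kappa> \<noteq> -q"
  shows "\<exists>E. (\<lambda>w. rho p q n m r0 (\<kappa> + w)) has_fps_expansion E"
proof -
  have base: "\<exists>G. (\<lambda>w. ((a + (\<kappa> + w)) / (a - (\<kappa> + w))) powi t) has_fps_expansion G"
    if "\<kappa> \<noteq> a" "\<kappa> \<noteq> -a" for a :: complex and t :: int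
  proof -
    have num: "(\<lambda>w. (a + \<kappa>) + w) has_fps_expansion fps_const (a + \<kappa>) + fps_X"
      by (intro has_fps_expansion_add has_fps_expansion_const has_fps_expansion_fps_X)
    have den: "(\<lambda>w. (a - \<kappa>) - w) has_fps_expansion fps_const (a - \<kappa>) - fps_X"
      by (intro has_fps_expansion_diff has_fps_expansion_const has_fps_expansion_fps_X)
    have "(\<lambda>w. ((a + \<kappa>) + w) / ((a - \<kappa>) - w)) has_fps_expansion (fps_const (a + \<kappa>) + fps_X) / (fps_const (a - \<kappa>) - fps_X)"
      using that by (intro has_fps_expansion_divide' num den) auto
    moreover have "(\<lambda>w. ((a + \<kappa>) + w) / ((a - \<kappa>) - w)) = (\<lambda>w. (a + (\<kappa> + w)) / (a - (\<kappa> + w)))"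
      by (simp add: algebra_simps)
    ultimately have "(\<lambda>w. (a + (\<kappa> + w)) / (a - (\<kappa> + w))) has_fps_expansion (fps_const (a + \<kappa>) + fps_X) / (fps_const (a - \<kappa>) - fps_X)"
      by simp
    moreover have "(a + (\<kappa> + 0)) / (a - (\<kappa> + 0)) \<noteq> 0" using that by (auto simp: add_eq_0_iff)
    ultimately show ?thesis using fps_exp_powi[where f="\<lambda>w. (a + (\<kappa> + w)) / (a - (\<kappa> + w))"] by simp
  qed
  obtain G1 where G1: "(\<lambda>w. ((p + (\<kappa> + w)) / (p - (\<kappa> + w))) powi n) has_fps_expansion G1"
    using base assms by blast
  obtain G2 where G2: "(\<lambda>w. ((q + (\<kappa> + w)) / (q - (\<kappa> + w))) powi m) has_fps_expansion G2"
    using base assms by blast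
  have "(\<lambda>w. ((p + (\<kappa> + w)) / (p - (\<kappa> + w))) powi n * ((q + (\<kappa> + w)) / (q - (\<kappa> + w))) powi m * r0)
     has_fps_expansion G1 * G2 * fps_const r0"
    by (intro has_fps_expansion_mult G1 G2 has_fps_expansion_const)
  then show ?thesis unfolding rho_def by blast
qed

lemma coeff_dk:
  assumes "(\<lambda>w. f (\<kappa> + w)) has_fps_expansion E"
  shows "fps_nth E a = dk a f \<kappa> / fact a"
proof -
  have "fps_nth E a = (deriv ^^ a) (\<lambda>w. f (\<kappa> + w)) 0 / fact a"
    by (rule fps_nth_fps_expansion[OF assms])
  also have "(deriv ^^ a) (\<lambda>w. f (\<kappa> + w)) 0 = (deriv ^^ a) f \<kappa>"
    using higher_deriv_shift_0[of a f \<kappa>] by (simp add: o_def)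
  finally show ?thesis by (simp add: dk_def)
qed

lemma rho_step_n:
  assumes "z \<noteq> p" "z \<noteq> -p"
  shows "(p - z) * rho p q (n+1) m r0 z = (p + z) * rho p q n m r0 z"
proof -
  have pz: "p - z \<noteq> 0" using assms by simp
  have x0: "(p + z) / (p - z) \<noteq> 0" using assms by (auto simp: add_eq_0_iff)
  have e: "((p + z) / (p - z)) powi (n+1) = ((p + z) / (p - z)) powi n * ((p + z) / (p - z))"
    by (rule power_int_add_1) (use x0 in auto)
  show ?thesis unfolding rho_def e using pz
    by (simp add: field_simps)
qed

lemma rho_step_m:
  assumes "z \<noteq> q" "z \<noteq> -q"
  shows "(q - z) * rho p q n (m+1) r0 z = (q + z) * rho p q n m r0 z"
proof -
  have pz: "q - z \<noteq> 0" using assms by simp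
  have x0: "(q + z) / (q - z) \<noteq> 0" using assms by (auto simp: add_eq_0_iff)
  have e: "((q + z) / (q - z)) powi (m+1) = ((q + z) / (q - z)) powi m * ((q + z) / (q - z))"
    by (rule power_int_add_1) (use x0 in auto)
  show ?thesis unfolding rho_def e using pz
    by (simp add: field_simps)
qed

lemma fps_same:
  fixes f g :: "complex \<Rightarrow> complex"
  assumes "f has_fps_expansion F" "g has_fps_expansion G" "eventually (\<lambda>w. f w = g w) (nhds 0)"
  shows "F = G"
proof (rule fps_ext)
  fix a
  show "fps_nth F a = fps_nth G a"
    using fps_nth_fps_expansion[OF assms(1)] fps_nth_fps_expansion[OF assms(2)]
      higher_deriv_cong_ev[OF assms(3) refl, of a] by simp
qed

lemma ev_avoid: "eventually (\<lambda>w. \<kappa> + w \<noteq> a \<and> \<kappa> + w \<noteq> b) (nhds (0::complex))"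
  if "\<kappa> \<noteq> a" "\<kappa> \<noteq> b"
proof -
  have "open (- {a - \<kappa>, b - \<kappa>})" by (intro open_Compl finite_imp_closed) auto
  moreover have "0 \<in> - {a - \<kappa>, b - \<kappa>}" using that by auto
  ultimately have "eventually (\<lambda>w. w \<in> - {a - \<kappa>, b - \<kappa>}) (nhds 0)"
    by (rule eventually_nhds_in_open)
  then show ?thesis by eventually_elim (auto simp: algebra_simps)
qed

lemma fps_rel_gen:
  fixes f0 f1 :: "complex \<Rightarrow> complex"
  assumes "(\<lambda>w. f1 (\<kappa> + w)) has_fps_expansion E1" "(\<lambda>w. f0 (\<kappa> + w)) has_fps_expansion E0"
    "eventually (\<lambda>w. (a - (\<kappa> + w)) * f1 (\<kappa> + w) = (a + (\<kappa> + w)) * f0 (\<kappa> + w)) (nhds 0)"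
  shows "(a - \<kappa>) * fps_nth E1 j - (if 1 \<le> j then fps_nth E1 (j - 1) else 0)
       = (a + \<kappa>) * fps_nth E0 j + (if 1 \<le> j then fps_nth E0 (j - 1) else 0)"
proof -
  have A1: "(\<lambda>w. ((a - \<kappa>) - w) * f1 (\<kappa> + w)) has_fps_expansion (fps_const (a - \<kappa>) - fps_X) * E1"
    by (intro has_fps_expansion_mult has_fps_expansion_diff has_fps_expansion_const
        has_fps_expansion_fps_X assms(1))
  have A0: "(\<lambda>w. ((a + \<kappa>) + w) * f0 (\<kappa> + w)) has_fps_expansion (fps_const (a + \<kappa>) + fps_X) * E0"
    by (intro has_fps_expansion_mult has_fps_expansion_add has_fps_expansion_const
        has_fps_expansion_fps_X assms(2))
  have ev: "eventually (\<lambda>w. ((a - \<kappa>) - w) * f1 (\<kappa> + w) = ((a + \<kappa>) + w) * f0 (\<kappa> + w)) (nhds 0)"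
    using assms(3) by eventually_elim (simp add: algebra_simps)
  have eq: "(fps_const (a - \<kappa>) - fps_X) * E1 = (fps_const (a + \<kappa>) + fps_X) * E0"
    by (rule fps_same[OF A1 A0 ev])
  have "fps_nth ((fps_const (a - \<kappa>) - fps_X) * E1) j = fps_nth ((fps_const (a + \<kappa>) + fps_X) * E0) j"
    using eq by simp
  then show ?thesis by (cases j) (simp_all add: algebra_simps fps_X_mult_nth)
qed



lemma mmul_assoc: "mmul N (mmul N A B) C i j = mmul N A (mmul N B C) i j"
proof -
  have "mmul N (mmul N A B) C i j = (\<Sum>l<N. \<Sum>t<N. A i t * B t l * C l j)"
    unfolding mmul_def by (simp add: sum_distrib_right)
  also have "\<dots> = (\<Sum>t<N. \<Sum>l<N. A i t * B t l * C l j)" by (rule sum.swap)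
  also have "\<dots> = mmul N A (mmul N B C) i j"
    unfolding mmul_def by (simp add: sum_distrib_left mult.assoc)
  finally show ?thesis .
qed

lemma mvec_mmul: "mvec N (mmul N A B) v i = mvec N A (mvec N B v) i"
proof -
  have "mvec N (mmul N A B) v i = (\<Sum>l<N. \<Sum>t<N. A i t * B t l * v l)"
    unfolding mmul_def mvec_def by (simp add: sum_distrib_right)
  also have "\<dots> = (\<Sum>t<N. \<Sum>l<N. A i t * B t l * v l)" by (rule sum.swap)
  also have "\<dots> = mvec N A (mvec N B v) i"
    unfolding mvec_def by (simp add: sum_distrib_left mult.assoc)
  finally show ?thesis .
qed

lemma mvec_cong: "(\<And>l. l < N \<Longrightarrow> A i l = B i l) \<Longrightarrow> (\<And>l. l < N \<Longrightarrow> v l = w l) \<Longrightarrow> mvec N A v i = mvec N B w i"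
  unfolding mvec_def by (rule sum.cong) auto

lemma mmul_cong: "(\<And>l. l < N \<Longrightarrow> A i l = A' i l) \<Longrightarrow> (\<And>l. l < N \<Longrightarrow> B l j = B' l j) \<Longrightarrow> mmul N A B i j = mmul N A' B' i j"
  unfolding mmul_def by (rule sum.cong) auto

lemma mvec_pm:
  assumes "i < N"
  shows "mvec N (\<lambda>i j. p * idm i j - G i j) v i = p * v i - mvec N G v i"
    "mvec N (\<lambda>i j. p * idm i j + G i j) v i = p * v i + mvec N G v i"
proof -
  have "mvec N (\<lambda>i j. p * idm i j - G i j) v i = (\<Sum>l<N. (if l = i then p * v i else 0) - G i l * v l)"
    unfolding mvec_def by (rule sum.cong) (auto simp: idm_def algebra_simps)
  then show "mvec N (\<lambda>i j. p * idm i j - G i j) v i = p * v i - mvec N G v i"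
    using assms by (simp add: sum_subtractf mvec_def)
  have "mvec N (\<lambda>i j. p * idm i j + G i j) v i = (\<Sum>l<N. (if l = i then p * v i else 0) + G i l * v l)"
    unfolding mvec_def by (rule sum.cong) (auto simp: idm_def algebra_simps)
  then show "mvec N (\<lambda>i j. p * idm i j + G i j) v i = p * v i + mvec N G v i"
    using assms by (simp add: sum.distrib mvec_def)
qed

lemma mmul_pm:
  assumes "i < N" "j < N"
  shows "mmul N A (\<lambda>i j. p * idm i j - G i j) i j = p * A i j - mmul N A G i j"
    "mmul N (\<lambda>i j. p * idm i j - G i j) A i j = p * A i j - mmul N G A i j"
    "mmul N A (\<lambda>i j. p * idm i j + G i j) i j = p * A i j + mmul N A G i j"
    "mmul N (\<lambda>i j. p * idm i j + G i j) A i j = p * A i j + mmul N G A i j"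
proof -
  have "mmul N A (\<lambda>i j. p * idm i j - G i j) i j = (\<Sum>l<N. (if l = j then p * A i j else 0) - A i l * G l j)"
    unfolding mmul_def by (rule sum.cong) (auto simp: idm_def algebra_simps)
  then show "mmul N A (\<lambda>i j. p * idm i j - G i j) i j = p * A i j - mmul N A G i j"
    using assms by (simp add: sum_subtractf mmul_def)
  have "mmul N (\<lambda>i j. p * idm i j - G i j) A i j = (\<Sum>l<N. (if l = i then p * A i j else 0) - G i l * A l j)"
    unfolding mmul_def by (rule sum.cong) (auto simp: idm_def algebra_simps)
  then show "mmul N (\<lambda>i j. p * idm i j - G i j) A i j = p * A i j - mmul N G A i j"
    using assms by (simp add: sum_subtractf mmul_def)
  have "mmul N A (\<lambda>i j. p * idm i j + G i j) i j = (\<Sum>l<N. (if l = j then p * A i j else 0) + A i l * G l j)"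
    unfolding mmul_def by (rule sum.cong) (auto simp: idm_def algebra_simps)
  then show "mmul N A (\<lambda>i j. p * idm i j + G i j) i j = p * A i j + mmul N A G i j"
    using assms by (simp add: sum.distrib mmul_def)
  have "mmul N (\<lambda>i j. p * idm i j + G i j) A i j = (\<Sum>l<N. (if l = i then p * A i j else 0) + G i l * A l j)"
    unfolding mmul_def by (rule sum.cong) (auto simp: idm_def algebra_simps)
  then show "mmul N (\<lambda>i j. p * idm i j + G i j) A i j = p * A i j + mmul N G A i j"
    using assms by (simp add: sum.distrib mmul_def)
qed

lemma mvec_comm:
  assumes "\<And>i j. i < N \<Longrightarrow> j < N \<Longrightarrow> mmul N A B i j = mmul N B A i j" "i < N"
  shows "mvec N B (mvec N A v) i = mvec N A (mvec N B v) i"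
proof -
  have "mvec N B (mvec N A v) i = mvec N (mmul N B A) v i" by (simp add: mvec_mmul)
  also have "\<dots> = mvec N (mmul N A B) v i" by (rule mvec_cong) (use assms in auto)
  also have "\<dots> = mvec N A (mvec N B v) i" by (simp add: mvec_mmul)
  finally show ?thesis .
qed

lemma transfer:
  assumes S: "sat_eqs N p q G c r M"
    and C: "\<And>i j. i < N \<Longrightarrow> j < N \<Longrightarrow> mmul N A G i j = mmul N G A i j"
  shows "sat_eqs N p q G c (\<lambda>n m. mvec N A (r n m)) (\<lambda>n m. mmul N A (M n m))"
  unfolding sat_eqs_def
proof (intro allI conjI impI)
  fix n m
  have comm: "\<And>i j. i < N \<Longrightarrow> j < N \<Longrightarrow> mmul N A (\<lambda>i j. a * idm i j - G i j) i j = mmul N (\<lambda>i j. a * idm i j - G i j) A i j"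
    "\<And>i j. i < N \<Longrightarrow> j < N \<Longrightarrow> mmul N A (\<lambda>i j. a * idm i j + G i j) i j = mmul N (\<lambda>i j. a * idm i j + G i j) A i j"
    for a using C by (simp_all add: mmul_pm)
  {
    fix i assume i: "i < N"
    have "mvec N (\<lambda>i j. p * idm i j - G i j) (mvec N A (r (n + 1) m)) i
        = mvec N A (mvec N (\<lambda>i j. p * idm i j - G i j) (r (n + 1) m)) i"
      by (rule mvec_comm[OF comm(1) i])
    also have "\<dots> = mvec N A (mvec N (\<lambda>i j. p * idm i j + G i j) (r n m)) i"
      by (rule mvec_cong) (use S in \<open>auto simp: sat_eqs_def\<close>)
    also have "\<dots> = mvec N (\<lambda>i j. p * idm i j + G i j) (mvec N A (r n m)) i"
      by (rule mvec_comm[OF comm(2) i, symmetric])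
    finally show "mvec N (\<lambda>i j. p * idm i j - G i j) (mvec N A (r (n + 1) m)) i
        = mvec N (\<lambda>i j. p * idm i j + G i j) (mvec N A (r n m)) i" .
  }
  {
    fix i assume i: "i < N"
    have "mvec N (\<lambda>i j. q * idm i j - G i j) (mvec N A (r n (m + 1))) i
        = mvec N A (mvec N (\<lambda>i j. q * idm i j - G i j) (r n (m + 1))) i"
      by (rule mvec_comm[OF comm(1) i])
    also have "\<dots> = mvec N A (mvec N (\<lambda>i j. q * idm i j + G i j) (r n m)) i"
      by (rule mvec_cong) (use S in \<open>auto simp: sat_eqs_def\<close>)
    also have "\<dots> = mvec N (\<lambda>i j. q * idm i j + G i j) (mvec N A (r n m)) i"
      by (rule mvec_comm[OF comm(2) i, symmetric])
    finally show "mvec N (\<lambda>i j. q * idm i j - G i j) (mvec N A (r n (m + 1))) i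
        = mvec N (\<lambda>i j. q * idm i j + G i j) (mvec N A (r n m)) i" .
  }
  {
    fix i j assume i: "i < N" and j: "j < N"
    have "mmul N (mmul N A (M n m)) G i j + mmul N G (mmul N A (M n m)) i j
        = mmul N A (mmul N (M n m) G) i j + mmul N (mmul N G A) (M n m) i j"
      by (simp add: mmul_assoc)
    also have "mmul N (mmul N G A) (M n m) i j = mmul N (mmul N A G) (M n m) i j"
      by (rule mmul_cong) (use C i in auto)
    also have "\<dots> = mmul N A (mmul N G (M n m)) i j" by (simp add: mmul_assoc)
    also have "mmul N A (mmul N (M n m) G) i j + \<dots> = mmul N A (\<lambda>i j. mmul N (M n m) G i j + mmul N G (M n m) i j) i j"
      unfolding mmul_def by (simp add: sum.distrib algebra_simps)
    also have "\<dots> = mmul N A (\<lambda>i j. r n m i * c j) i j"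
      by (rule mmul_cong) (use S j in \<open>auto simp: sat_eqs_def\<close>)
    also have "\<dots> = mvec N A (r n m) i * c j"
      unfolding mmul_def mvec_def by (simp add: sum_distrib_right mult.assoc)
    finally show "mmul N (mmul N A (M n m)) G i j + mmul N G (mmul N A (M n m)) i j = mvec N A (r n m) i * c j" .
  }
qed



definition BT :: "nat \<Rightarrow> nat list \<Rightarrow> (nat \<Rightarrow> complex) \<Rightarrow> (nat \<Rightarrow> nat \<Rightarrow> complex) \<Rightarrow> nat \<Rightarrow> nat \<Rightarrow> complex" where
  "BT N1 Ns dg ts i j =
    (let L = N1 # Ns; bi = blk L i; bj = blk L j; a = loc L i; b = loc L j in
     if bi \<noteq> bj then 0
     else if bi = 0 then (if a = b then dg a else 0)
     else if b \<le> a then ts bi (a - b) else 0)"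

lemma Amat_BT: "Amat N1 Ns aseq = BT N1 Ns (\<lambda>_. 1) aseq"
  by (intro ext) (simp add: Amat_def BT_def)

lemma Fmat_BT: "Fmat p q N1 k r0D Ns kap r0J n m = BT N1 Ns (\<lambda>a. rho p q n m (r0D a) (k a)) (\<lambda>b d. dk d (rho p q n m (r0J b)) (kap b) / fact d)"
  by (intro ext) (simp add: Fmat_def BT_def)

lemma BT_comm:
  assumes i: "i < sum_list (N1#Ns)" and j: "j < sum_list (N1#Ns)"
  shows "mmul (sum_list (N1#Ns)) (BT N1 Ns dg ts) (Gam N1 k Ns kap) i j
       = mmul (sum_list (N1#Ns)) (Gam N1 k Ns kap) (BT N1 Ns dg ts) i j"
proof -
  let ?L = "N1#Ns" and ?N = "sum_list (N1#Ns)" and ?T = "BT N1 Ns dg ts" and ?G = "Gam N1 k Ns kap"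
  have l: "mmul ?N ?T ?G i j = (\<Sum>l<?N. ?G l j * ?T i l)" unfolding mmul_def by (simp add: mult.commute)
  have r: "mmul ?N ?G ?T i j = (\<Sum>l<?N. ?G i l * ?T l j)" unfolding mmul_def by simp
  have ci: "1 \<le> loc ?L i \<Longrightarrow> blk ?L (i-1) = blk ?L i \<and> loc ?L (i-1) = loc ?L i - 1" using nb_prev[OF i] by blast
  have cj: "loc ?L j + 1 < ?L ! blk ?L j \<Longrightarrow> blk ?L (j+1) = blk ?L j \<and> loc ?L (j+1) = loc ?L j + 1" using nb_next[OF j] by blast
  have ai: "loc ?L i < ?L ! blk ?L i" using idx[OF i] by blast
  have "gd N1 k Ns kap j * ?T i j + (if blk ?L j \<noteq> 0 \<and> loc ?L j + 1 < ?L ! blk ?L j then ?T i (j + 1) else 0)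
     = gd N1 k Ns kap i * ?T i j + (if blk ?L i \<noteq> 0 \<and> 1 \<le> loc ?L i then ?T (i - 1) j else 0)"
  proof (cases "blk ?L i = blk ?L j")
    case False
    then show ?thesis using ci cj by (auto simp: BT_def Let_def)
  next
    case True
    show ?thesis
    proof (cases "blk ?L i = 0")
      case True
      then show ?thesis using \<open>blk ?L i = blk ?L j\<close> by (auto simp: BT_def Let_def gd_def)
    next
      case False
      have e: "(loc ?L j + 1 < ?L ! blk ?L j \<and> loc ?L j + 1 \<le> loc ?L i) \<longleftrightarrow> (1 \<le> loc ?L i \<and> loc ?L j \<le> loc ?L i - 1)"
        using ai \<open>blk ?L i = blk ?L j\<close> by auto
      have e2: "loc ?L i - (loc ?L j + 1) = loc ?L i - 1 - loc ?L j" by simp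
      show ?thesis using False \<open>blk ?L i = blk ?L j\<close> ci cj e e2
        by (auto simp: BT_def Let_def gd_def)
    qed
  qed
  then show ?thesis unfolding l r Gam_col_sum[OF j] Gam_row_sum[OF i] by (simp add: mult.commute)
qed



lemma dj_alg:
  fixes s :: complex
  assumes "s \<noteq> 0"
  shows "s * (- ((- 1 / s) ^ (b + 1))) + (if 1 \<le> b then - ((- 1 / s) ^ b) else 0) = (if b = 0 then 1 else 0)"
proof -
  have "s * (- ((- 1 / s) ^ (b + 1))) = (- 1 / s) ^ b" using assms by simp
  then show ?thesis by auto
qed

definition gJ :: "complex \<Rightarrow> nat \<Rightarrow> nat \<Rightarrow> complex" where
  "gJ t a b = of_nat ((a + b) choose a) * (- 1) ^ (a + b) / t ^ (a + b + 1)"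

lemma jj_alg0:
  fixes s :: complex
  assumes "s \<noteq> 0"
  defines "g \<equiv> \<lambda>a b. of_nat ((a + b) choose a) * (- 1) ^ (a + b) / s ^ (a + b + 1)"
  shows "s * g a b + (if 1 \<le> a then g (a - 1) b else 0) + (if 1 \<le> b then g a (b - 1) else 0)
       = (if a = 0 \<and> b = 0 then 1 else 0)"
proof -
  have sg: "s * g a b = of_nat ((a + b) choose a) * (- 1) ^ (a + b) / s ^ (a + b)"
    using assms(1) unfolding g_def by (simp add: field_simps)
  show ?thesis
  proof (cases a)
    case 0
    show ?thesis
    proof (cases b)
      case 0 then show ?thesis using \<open>a = 0\<close> sg by simp
    next
      case (Suc b')
      have "g 0 b' = (- 1) ^ b' / s ^ b" using Suc unfolding g_def by simp
      then show ?thesis using sg 0 Suc by (simp add: field_simps)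
    qed
  next
    case (Suc a')
    show ?thesis
    proof (cases b)
      case 0
      have "g a' 0 = (- 1) ^ a' / s ^ a" using Suc unfolding g_def by simp
      then show ?thesis using sg 0 Suc by (simp add: field_simps)
    next
      case (Suc b')
      have pas: "(a + b) choose a = ((a' + b) choose a') + ((a + b') choose a)"
        using \<open>a = Suc a'\<close> Suc by simp
      have g1: "g a' b = of_nat ((a' + b) choose a') * (- 1) ^ (a' + b) / s ^ (a + b)"
        using \<open>a = Suc a'\<close> unfolding g_def by simp
      have g2: "g a b' = of_nat ((a + b') choose a) * (- 1) ^ (a + b') / s ^ (a + b)"
        using Suc unfolding g_def by simp
      have m: "(- 1 :: complex) ^ (a + b) = - ((- 1) ^ (a' + b))" "(- 1 :: complex) ^ (a + b) = - ((- 1) ^ (a + b'))"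
        using \<open>a = Suc a'\<close> Suc by simp_all
      have "s * g a b + g a' b + g a b' = 0"
        unfolding sg g1 g2 pas of_nat_add using m assms(1) by (simp add: field_simps)
      then show ?thesis using \<open>a = Suc a'\<close> Suc by simp
    qed
  qed
qed

lemma H_comm:
  assumes i: "i < sum_list (N1#Ns)" and j: "j < sum_list (N1#Ns)"
  shows "mmul (sum_list (N1#Ns)) (Hmat N1 Ns c) (Gam N1 k Ns kap) i j
       = mmul (sum_list (N1#Ns)) (\<lambda>i j. Gam N1 k Ns kap j i) (Hmat N1 Ns c) i j"
proof -
  let ?L = "N1#Ns" and ?N = "sum_list (N1#Ns)" and ?T = "Hmat N1 Ns c" and ?G = "Gam N1 k Ns kap"
  have l: "mmul ?N ?T ?G i j = (\<Sum>l<?N. ?G l j * ?T i l)" unfolding mmul_def by (simp add: mult.commute)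
  have r: "mmul ?N (\<lambda>i j. ?G j i) ?T i j = (\<Sum>l<?N. ?G l i * ?T l j)" unfolding mmul_def by simp
  have ci: "loc ?L i + 1 < ?L ! blk ?L i \<Longrightarrow> blk ?L (i+1) = blk ?L i \<and> loc ?L (i+1) = loc ?L i + 1" using nb_next[OF i] by blast
  have cj: "loc ?L j + 1 < ?L ! blk ?L j \<Longrightarrow> blk ?L (j+1) = blk ?L j \<and> loc ?L (j+1) = loc ?L j + 1" using nb_next[OF j] by blast
  have "gd N1 k Ns kap j * ?T i j + (if blk ?L j \<noteq> 0 \<and> loc ?L j + 1 < ?L ! blk ?L j then ?T i (j + 1) else 0)
     = gd N1 k Ns kap i * ?T i j + (if blk ?L i \<noteq> 0 \<and> loc ?L i + 1 < ?L ! blk ?L i then ?T (i + 1) j else 0)"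
  proof (cases "blk ?L i = blk ?L j")
    case False
    then show ?thesis using ci cj by (auto simp: Hmat_def Let_def)
  next
    case True
    show ?thesis
    proof (cases "blk ?L i = 0")
      case True
      then show ?thesis using \<open>blk ?L i = blk ?L j\<close> by (auto simp: Hmat_def Let_def gd_def)
    next
      case False
      have e: "loc ?L i + loc ?L j + 1 < ?L ! blk ?L i \<Longrightarrow> loc ?L j + 1 < ?L ! blk ?L j \<and> loc ?L i + 1 < ?L ! blk ?L i"
        using \<open>blk ?L i = blk ?L j\<close> by auto
      show ?thesis using False \<open>blk ?L i = blk ?L j\<close> ci cj e
        by (auto simp: Hmat_def Let_def gd_def)
    qed
  qed
  then show ?thesis unfolding l r Gam_col_sum[OF j] Gam_col_sum[OF i] by (simp add: mult.commute)
qed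

definition ev :: "nat \<Rightarrow> nat list \<Rightarrow> nat \<Rightarrow> complex" where
  "ev N1 Ns i = (if blk (N1#Ns) i = 0 \<or> loc (N1#Ns) i = 0 then 1 else 0)"

lemma jj_alg:
  fixes s :: complex
  assumes "s \<noteq> 0"
  shows "s * gJ s a b + (if 1 \<le> a then gJ s (a - 1) b else 0) + (if 1 \<le> b then gJ s a (b - 1) else 0)
       = (if a = 0 \<and> b = 0 then 1 else 0)"
  using jj_alg0[OF assms, of a b] unfolding gJ_def by simp

lemma Gmat_JJ: "blk (N1#Ns) i \<noteq> 0 \<Longrightarrow> blk (N1#Ns) j \<noteq> 0 \<Longrightarrow>
  Gmat N1 k Ns kap i j = gJ (kap (blk (N1#Ns) i) + kap (blk (N1#Ns) j)) (loc (N1#Ns) i) (loc (N1#Ns) j)"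
  by (simp add: Gmat_def gJ_def Let_def)

lemma rearr: "(a::complex)*t + x + (b*t + y) = (a+b)*t + x + y"
  by (simp add: algebra_simps)

lemma G_rel:
  assumes i: "i < sum_list (N1#Ns)" and j: "j < sum_list (N1#Ns)"
    and nz: "\<And>i j. i < sum_list (N1#Ns) \<Longrightarrow> j < sum_list (N1#Ns) \<Longrightarrow> gd N1 k Ns kap i + gd N1 k Ns kap j \<noteq> 0"
  shows "mmul (sum_list (N1#Ns)) (Gam N1 k Ns kap) (Gmat N1 k Ns kap) i j
       + mmul (sum_list (N1#Ns)) (Gmat N1 k Ns kap) (\<lambda>i j. Gam N1 k Ns kap j i) i j = ev N1 Ns i * ev N1 Ns j"
proof -
  let ?L = "N1#Ns" and ?N = "sum_list (N1#Ns)" and ?T = "Gmat N1 k Ns kap" and ?G = "Gam N1 k Ns kap"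
  have l: "mmul ?N ?G ?T i j = (\<Sum>l<?N. ?G i l * ?T l j)" unfolding mmul_def by simp
  have r: "mmul ?N ?T (\<lambda>i j. ?G j i) i j = (\<Sum>l<?N. ?G j l * ?T i l)" unfolding mmul_def by (simp add: mult.commute)
  have ci: "1 \<le> loc ?L i \<Longrightarrow> blk ?L (i-1) = blk ?L i \<and> loc ?L (i-1) = loc ?L i - 1" using nb_prev[OF i] by blast
  have cj: "1 \<le> loc ?L j \<Longrightarrow> blk ?L (j-1) = blk ?L j \<and> loc ?L (j-1) = loc ?L j - 1" using nb_prev[OF j] by blast
  have s: "gd N1 k Ns kap i + gd N1 k Ns kap j \<noteq> 0" using nz i j .
  have "gd N1 k Ns kap i * ?T i j + (if blk ?L i \<noteq> 0 \<and> 1 \<le> loc ?L i then ?T (i - 1) j else 0)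
     + (gd N1 k Ns kap j * ?T i j + (if blk ?L j \<noteq> 0 \<and> 1 \<le> loc ?L j then ?T i (j - 1) else 0))
     = ev N1 Ns i * ev N1 Ns j"
    unfolding rearr
  proof (cases "blk ?L i = 0")
    case bi: True
    show "(gd N1 k Ns kap i + gd N1 k Ns kap j) * ?T i j + (if blk ?L i \<noteq> 0 \<and> 1 \<le> loc ?L i then ?T (i - 1) j else 0)
     + (if blk ?L j \<noteq> 0 \<and> 1 \<le> loc ?L j then ?T i (j - 1) else 0) = ev N1 Ns i * ev N1 Ns j"
    proof (cases "blk ?L j = 0")
      case True
      then show ?thesis using bi s by (simp add: Gmat_def Let_def gd_def ev_def)
    next
      case False
      define t where "t = k (loc ?L i) + kap (blk ?L j)"
      have D: "t * (- ((- 1 / t) ^ (loc ?L j + 1)))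
         + (if 1 \<le> loc ?L j then - ((- 1 / t) ^ (loc ?L j)) else 0)
         = (if loc ?L j = 0 then 1 else 0)"
        by (rule dj_alg) (use s bi False in \<open>simp add: gd_def t_def\<close>)
      have e1: "gd N1 k Ns kap i + gd N1 k Ns kap j = t" using bi False by (simp add: gd_def t_def)
      have e2: "?T i j = - ((- 1 / t) ^ (loc ?L j + 1))" using bi False by (simp add: Gmat_def Let_def t_def)
      have e3: "(if blk ?L j \<noteq> 0 \<and> 1 \<le> loc ?L j then ?T i (j - 1) else 0) = (if 1 \<le> loc ?L j then - ((- 1 / t) ^ (loc ?L j)) else 0)"
        using bi False cj by (auto simp: Gmat_def Let_def t_def)
      have e4: "ev N1 Ns i * ev N1 Ns j = (if loc ?L j = 0 then 1 else 0)" using bi False by (simp add: ev_def)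
      show ?thesis unfolding e1 e2 e3 e4 using bi D by simp
    qed
  next
    case bi: False
    show "(gd N1 k Ns kap i + gd N1 k Ns kap j) * ?T i j + (if blk ?L i \<noteq> 0 \<and> 1 \<le> loc ?L i then ?T (i - 1) j else 0)
     + (if blk ?L j \<noteq> 0 \<and> 1 \<le> loc ?L j then ?T i (j - 1) else 0) = ev N1 Ns i * ev N1 Ns j"
    proof (cases "blk ?L j = 0")
      case True
      define t where "t = k (loc ?L j) + kap (blk ?L i)"
      have D: "t * (- ((- 1 / t) ^ (loc ?L i + 1)))
         + (if 1 \<le> loc ?L i then - ((- 1 / t) ^ (loc ?L i)) else 0)
         = (if loc ?L i = 0 then 1 else 0)"
        by (rule dj_alg) (use s bi True in \<open>simp add: gd_def t_def add.commute\<close>)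
      have e1: "gd N1 k Ns kap i + gd N1 k Ns kap j = t" using bi True by (simp add: gd_def t_def add.commute)
      have e2: "?T i j = - ((- 1 / t) ^ (loc ?L i + 1))" using bi True by (simp add: Gmat_def Let_def t_def)
      have e3: "(if blk ?L i \<noteq> 0 \<and> 1 \<le> loc ?L i then ?T (i - 1) j else 0) = (if 1 \<le> loc ?L i then - ((- 1 / t) ^ (loc ?L i)) else 0)"
        using bi True ci by (auto simp: Gmat_def Let_def t_def)
      have e4: "ev N1 Ns i * ev N1 Ns j = (if loc ?L i = 0 then 1 else 0)" using bi True by (simp add: ev_def)
      show ?thesis unfolding e1 e2 e3 e4 using True D by simp
    next
      case False
      define t where "t = kap (blk ?L i) + kap (blk ?L j)"
      have D: "t * gJ t (loc ?L i) (loc ?L j)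
        + (if 1 \<le> loc ?L i then gJ t (loc ?L i - 1) (loc ?L j) else 0)
        + (if 1 \<le> loc ?L j then gJ t (loc ?L i) (loc ?L j - 1) else 0)
        = (if loc ?L i = 0 \<and> loc ?L j = 0 then 1 else 0)"
        by (rule jj_alg) (use s bi False in \<open>simp add: gd_def t_def\<close>)
      have e1: "gd N1 k Ns kap i + gd N1 k Ns kap j = t" using bi False by (simp add: gd_def t_def)
      have e2: "?T i j = gJ t (loc ?L i) (loc ?L j)" using bi False by (simp add: Gmat_JJ t_def)
      have e3: "(if blk ?L i \<noteq> 0 \<and> 1 \<le> loc ?L i then ?T (i - 1) j else 0) = (if 1 \<le> loc ?L i then gJ t (loc ?L i - 1) (loc ?L j) else 0)"
        using bi False ci by (cases "1 \<le> loc ?L i") (simp_all add: Gmat_JJ t_def)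
      have e3': "(if blk ?L j \<noteq> 0 \<and> 1 \<le> loc ?L j then ?T i (j - 1) else 0) = (if 1 \<le> loc ?L j then gJ t (loc ?L i) (loc ?L j - 1) else 0)"
        using bi False cj by (cases "1 \<le> loc ?L j") (simp_all add: Gmat_JJ t_def)
      have e4: "ev N1 Ns i * ev N1 Ns j = (if loc ?L i = 0 \<and> loc ?L j = 0 then 1 else 0)" using bi False by (simp add: ev_def)
      show ?thesis unfolding e1 e2 e3 e3' e4 using D by simp
    qed
  qed
  then show ?thesis unfolding l r Gam_row_sum[OF j] Gam_row_sum[OF i] .
qed



lemma blk_off:
  assumes i: "i < sum_list L"
  shows "off L (blk L i) < sum_list L \<and> blk L (off L (blk L i)) = blk L i \<and> loc L (off L (blk L i)) = 0"
proof -
  have p: "blk L i < length L" "off L (blk L i) \<le> i" "i < off L (blk L i) + L ! blk L i" using blk_props[OF i] by auto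
  have b: "blk L (off L (blk L i)) = blk L i" using p by (intro blk_eq) auto
  show ?thesis using b p i by (auto simp: loc_def)
qed

lemma Fe_sum:
  assumes i: "i < sum_list (N1#Ns)"
  shows "(\<Sum>t<sum_list (N1#Ns). BT N1 Ns dg ts i t * ev N1 Ns t)
     = (if blk (N1#Ns) i = 0 then dg (loc (N1#Ns) i) else ts (blk (N1#Ns) i) (loc (N1#Ns) i))"
proof -
  let ?L = "N1#Ns" and ?N = "sum_list (N1#Ns)"
  define t0 where "t0 = (if blk ?L i = 0 then i else off ?L (blk ?L i))"
  define val where "val = (if blk ?L i = 0 then dg (loc ?L i) else ts (blk ?L i) (loc ?L i))"
  have t0: "t0 < ?N" "blk ?L t0 = blk ?L i" using blk_off[OF i] i by (auto simp: t0_def)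
  have pt: "BT N1 Ns dg ts i t * ev N1 Ns t = (if t = t0 then val else 0)" if t: "t < ?N" for t
  proof (cases "blk ?L t = blk ?L i")
    case False
    then have "t \<noteq> t0" using t0 by auto
    then show ?thesis using False by (simp add: BT_def Let_def)
  next
    case True
    have sb: "(t = i \<longleftrightarrow> loc ?L t = loc ?L i)" using same_blk[OF t i True] by blast
    have it: "t = off ?L (blk ?L t) + loc ?L t" using idx[OF t] by blast
    show ?thesis
    proof (cases "blk ?L i = 0")
      case True
      then show ?thesis using \<open>blk ?L t = blk ?L i\<close> sb
        by (auto simp: BT_def Let_def ev_def t0_def val_def)
    next
      case False
      have "t = t0 \<longleftrightarrow> loc ?L t = 0" unfolding t0_def using False \<open>blk ?L t = blk ?L i\<close> it by auto
      then show ?thesis using False \<open>blk ?L t = blk ?L i\<close>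
        by (auto simp: BT_def Let_def ev_def val_def)
    qed
  qed
  have "(\<Sum>t<?N. BT N1 Ns dg ts i t * ev N1 Ns t) = (\<Sum>t<?N. if t = t0 then val else 0)"
    by (rule sum.cong) (auto simp: pt)
  also have "\<dots> = val" using t0 by simp
  finally show ?thesis unfolding val_def .
qed

lemma eH_sum:
  assumes j: "j < sum_list (N1#Ns)"
  shows "(\<Sum>l<sum_list (N1#Ns). ev N1 Ns l * Hmat N1 Ns c l j) = c j"
proof -
  let ?L = "N1#Ns" and ?N = "sum_list (N1#Ns)"
  define t0 where "t0 = (if blk ?L j = 0 then j else off ?L (blk ?L j))"
  have t0: "t0 < ?N" "blk ?L t0 = blk ?L j" using blk_off[OF j] j by (auto simp: t0_def)
  have jj: "j = off ?L (blk ?L j) + loc ?L j" "loc ?L j < ?L ! blk ?L j" using idx[OF j] by auto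
  have pt: "ev N1 Ns t * Hmat N1 Ns c t j = (if t = t0 then c j else 0)" if t: "t < ?N" for t
  proof (cases "blk ?L t = blk ?L j")
    case False
    then have "t \<noteq> t0" using t0 by auto
    then show ?thesis using False by (simp add: Hmat_def Let_def)
  next
    case True
    have sb: "(t = j \<longleftrightarrow> loc ?L t = loc ?L j)" using same_blk[OF t j True] by blast
    have it: "t = off ?L (blk ?L t) + loc ?L t" using idx[OF t] by blast
    show ?thesis
    proof (cases "blk ?L j = 0")
      case True
      then show ?thesis using \<open>blk ?L t = blk ?L j\<close> sb
        by (auto simp: Hmat_def Let_def ev_def t0_def)
    next
      case False
      have "t = t0 \<longleftrightarrow> loc ?L t = 0" unfolding t0_def using False \<open>blk ?L t = blk ?L j\<close> it by auto
      moreover have "c (off ?L (blk ?L j) + loc ?L j) = c j" using jj by simp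
      ultimately show ?thesis using False \<open>blk ?L t = blk ?L j\<close> jj
        by (auto simp: Hmat_def Let_def ev_def)
    qed
  qed
  have "(\<Sum>l<?N. ev N1 Ns l * Hmat N1 Ns c l j) = (\<Sum>t<?N. if t = t0 then c j else 0)"
    by (rule sum.cong) (auto simp: pt)
  also have "\<dots> = c j" using t0 by simp
  finally show ?thesis .
qed

lemma gd_eig:
  assumes i: "i < sum_list (N1#Ns)"
  shows "is_eigenvalue (sum_list (N1#Ns)) (Gam N1 k Ns kap) (gd N1 k Ns kap i)"
proof -
  let ?L = "N1#Ns" and ?N = "sum_list (N1#Ns)"
  define j where "j = (if blk ?L i = 0 then i else off ?L (blk ?L i) + ?L ! blk ?L i - 1)"
  have p: "blk ?L i < length ?L" "off ?L (blk ?L i) \<le> i" "i < off ?L (blk ?L i) + ?L ! blk ?L i"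
    using blk_props[OF i] by auto
  have jN: "j < ?N" using p off_le_sum[of "blk ?L i" ?L] i unfolding j_def by auto
  have bj: "blk ?L j = blk ?L i" unfolding j_def using p by (auto intro: blk_eq)
  have gj: "gd N1 k Ns kap j = gd N1 k Ns kap i"
  proof (cases "blk ?L i = 0")
    case True then show ?thesis by (simp add: j_def)
  next
    case False then show ?thesis using bj by (simp add: gd_def)
  qed
  have nc: "\<not> (blk ?L j \<noteq> 0 \<and> loc ?L j + 1 < ?L ! blk ?L j)"
  proof (cases "blk ?L i = 0")
    case True then show ?thesis using bj by simp
  next
    case False
    have "loc ?L j = ?L ! blk ?L i - 1" using bj p False by (simp add: loc_def j_def)
    then show ?thesis using bj p by simp
  qed
  define v where "v = (\<lambda>l. if l = j then (1::complex) else 0)"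
  have "\<forall>t<?N. mvec ?N (Gam N1 k Ns kap) v t = gd N1 k Ns kap i * v t"
  proof (intro allI impI)
    fix t assume t: "t < ?N"
    have "mvec ?N (Gam N1 k Ns kap) v t = (\<Sum>l<?N. if l = j then Gam N1 k Ns kap t j else 0)"
      unfolding mvec_def v_def by (rule sum.cong) auto
    also have "\<dots> = Gam N1 k Ns kap t j" using jN by simp
    also have "\<dots> = gd N1 k Ns kap i * v t" using Gam_col[OF jN t, where k=k and kap=kap] nc gj by (auto simp: v_def)
    finally show "mvec ?N (Gam N1 k Ns kap) v t = gd N1 k Ns kap i * v t" .
  qed
  moreover have "\<exists>t<?N. v t \<noteq> 0" using jN by (auto simp: v_def)
  ultimately show ?thesis unfolding is_eigenvalue_def by blast
qed



lemma J_rel_n: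
  assumes "\<kappa> \<noteq> p" "\<kappa> \<noteq> -p" "\<kappa> \<noteq> q" "\<kappa> \<noteq> -q"
  shows "(p - \<kappa>) * (dk a (rho p q (n+1) m r0) \<kappa> / fact a) - (if 1 \<le> a then dk (a-1) (rho p q (n+1) m r0) \<kappa> / fact (a-1) else 0)
       = (p + \<kappa>) * (dk a (rho p q n m r0) \<kappa> / fact a) + (if 1 \<le> a then dk (a-1) (rho p q n m r0) \<kappa> / fact (a-1) else 0)"
proof -
  obtain E1 where E1: "(\<lambda>w. rho p q (n+1) m r0 (\<kappa> + w)) has_fps_expansion E1" using rho_exp[OF assms] by blast
  obtain E0 where E0: "(\<lambda>w. rho p q n m r0 (\<kappa> + w)) has_fps_expansion E0" using rho_exp[OF assms] by blast
  have ev: "eventually (\<lambda>w. (p - (\<kappa> + w)) * rho p q (n+1) m r0 (\<kappa> + w) = (p + (\<kappa> + w)) * rho p q n m r0 (\<kappa> + w)) (nhds 0)"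
    using ev_avoid[OF assms(1) assms(2)] by eventually_elim (rule rho_step_n, auto)
  show ?thesis using fps_rel_gen[OF E1 E0 ev, of a] unfolding coeff_dk[OF E1] coeff_dk[OF E0] by simp
qed

lemma J_rel_m:
  assumes "\<kappa> \<noteq> p" "\<kappa> \<noteq> -p" "\<kappa> \<noteq> q" "\<kappa> \<noteq> -q"
  shows "(q - \<kappa>) * (dk a (rho p q n (m+1) r0) \<kappa> / fact a) - (if 1 \<le> a then dk (a-1) (rho p q n (m+1) r0) \<kappa> / fact (a-1) else 0)
       = (q + \<kappa>) * (dk a (rho p q n m r0) \<kappa> / fact a) + (if 1 \<le> a then dk (a-1) (rho p q n m r0) \<kappa> / fact (a-1) else 0)"
proof -
  obtain E1 where E1: "(\<lambda>w. rho p q n (m+1) r0 (\<kappa> + w)) has_fps_expansion E1" using rho_exp[OF assms] by blast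
  obtain E0 where E0: "(\<lambda>w. rho p q n m r0 (\<kappa> + w)) has_fps_expansion E0" using rho_exp[OF assms] by blast
  have ev: "eventually (\<lambda>w. (q - (\<kappa> + w)) * rho p q n (m+1) r0 (\<kappa> + w) = (q + (\<kappa> + w)) * rho p q n m r0 (\<kappa> + w)) (nhds 0)"
    using ev_avoid[OF assms(3) assms(4)] by eventually_elim (rule rho_step_m, auto)
  show ?thesis using fps_rel_gen[OF E1 E0 ev, of a] unfolding coeff_dk[OF E1] coeff_dk[OF E0] by simp
qed

lemma mmul_assoc_fun: "mmul N (mmul N A B) C = mmul N A (mmul N B C)"
  by (intro ext) (rule mmul_assoc)

lemma mmul_addL: "mmul N A C i j + mmul N B C i j = mmul N (\<lambda>a b. A a b + B a b) C i j"
  unfolding mmul_def by (simp add: sum.distrib distrib_right)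

lemma mmul_addR: "mmul N A B i j + mmul N A C i j = mmul N A (\<lambda>a b. B a b + C a b) i j"
  unfolding mmul_def by (simp add: sum.distrib distrib_left)

lemma lin_aux: "(p - K) * A1 - B1 = (p + K) * A0 + B0 \<Longrightarrow> p * A1 - (K * A1 + B1) = p * A0 + (K * A0 + (B0::complex))"
  by (simp add: algebra_simps)

theorem theorem3:
  fixes p q :: complex and N1 :: nat and Ns :: "nat list"
    and k r0D kap r0J c :: "nat \<Rightarrow> complex"
  defines "N \<equiv> sum_list (N1 # Ns)"
  defines "\<Gamma> \<equiv> Gam N1 k Ns kap"
  assumes Ns_pos: "\<forall>x\<in>set Ns. 1 \<le> x"
    and eig_sum: "\<And>la mu. is_eigenvalue N \<Gamma> la \<Longrightarrow> is_eigenvalue N \<Gamma> mu \<Longrightarrow> la + mu \<noteq> 0"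
    and eig_pq: "\<And>la. is_eigenvalue N \<Gamma> la \<Longrightarrow> p \<noteq> la \<and> p \<noteq> - la \<and> q \<noteq> la \<and> q \<noteq> - la"
  shows "sat_eqs N p q \<Gamma> c (rvec p q N1 k r0D Ns kap r0J) (Mmat p q N1 k r0D Ns kap r0J c)
    \<and> (\<forall>aseq :: nat \<Rightarrow> nat \<Rightarrow> complex.
         sat_eqs N p q \<Gamma> c
           (\<lambda>n m. mvec N (Amat N1 Ns aseq) (rvec p q N1 k r0D Ns kap r0J n m))
           (\<lambda>n m. mmul N (Amat N1 Ns aseq) (Mmat p q N1 k r0D Ns kap r0J c n m)))"
proof -
  let ?L = "N1#Ns"
  let ?g = "gd N1 k Ns kap"
  let ?r = "rvec p q N1 k r0D Ns kap r0J"
  have eig: "\<And>i. i < N \<Longrightarrow> is_eigenvalue N \<Gamma> (?g i)" using gd_eig unfolding N_def \<Gamma>_def by blast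
  have nz: "\<And>i j. i < N \<Longrightarrow> j < N \<Longrightarrow> ?g i + ?g j \<noteq> 0" using eig eig_sum by blast
  have pq: "\<And>i. i < N \<Longrightarrow> p \<noteq> ?g i \<and> p \<noteq> - ?g i \<and> q \<noteq> ?g i \<and> q \<noteq> - ?g i" using eig eig_pq by blast
  have rv: "\<And>n m i. ?r n m i = (if blk ?L i = 0 then rho p q n m (r0D (loc ?L i)) (k (loc ?L i))
      else dk (loc ?L i) (rho p q n m (r0J (blk ?L i))) (kap (blk ?L i)) / fact (loc ?L i))"
    by (simp add: rvec_def Let_def)
  have rvJ: "\<And>n m i. blk ?L i \<noteq> 0 \<Longrightarrow> ?r n m i = dk (loc ?L i) (rho p q n m (r0J (blk ?L i))) (kap (blk ?L i)) / fact (loc ?L i)"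
    by (simp add: rvec_def Let_def)
  have Gv: "\<And>v i. i < N \<Longrightarrow> mvec N \<Gamma> v i = ?g i * v i + (if blk ?L i \<noteq> 0 \<and> 1 \<le> loc ?L i then v (i - 1) else 0)"
    unfolding mvec_def N_def \<Gamma>_def by (rule Gam_row_sum)
  have rprev: "\<And>n m i. i < N \<Longrightarrow> blk ?L i \<noteq> 0 \<Longrightarrow>
      (if blk ?L i \<noteq> 0 \<and> 1 \<le> loc ?L i then ?r n m (i - 1) else 0)
      = (if 1 \<le> loc ?L i then dk (loc ?L i - 1) (rho p q n m (r0J (blk ?L i))) (kap (blk ?L i)) / fact (loc ?L i - 1) else 0)"
  proof -
    fix n m i assume i: "i < N" and b: "blk ?L i \<noteq> 0"
    show "(if blk ?L i \<noteq> 0 \<and> 1 \<le> loc ?L i then ?r n m (i - 1) else 0)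
      = (if 1 \<le> loc ?L i then dk (loc ?L i - 1) (rho p q n m (r0J (blk ?L i))) (kap (blk ?L i)) / fact (loc ?L i - 1) else 0)"
      using nb_prev[of i ?L] i b unfolding N_def by (cases "1 \<le> loc ?L i") (simp_all add: rv)
  qed
  have S: "sat_eqs N p q \<Gamma> c ?r (Mmat p q N1 k r0D Ns kap r0J c)"
    unfolding sat_eqs_def
  proof (intro allI conjI impI)
    fix n m
    {
      fix i assume i: "i < N"
      have pqi: "?g i \<noteq> p" "?g i \<noteq> -p" "?g i \<noteq> q" "?g i \<noteq> -q" using pq[OF i] by auto
      show "mvec N (\<lambda>i j. p * idm i j - \<Gamma> i j) (?r (n + 1) m) i = mvec N (\<lambda>i j. p * idm i j + \<Gamma> i j) (?r n m) i"
        unfolding mvec_pm[OF i] Gv[OF i]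
      proof (cases "blk ?L i = 0")
        case True
        have "(p - ?g i) * ?r (n+1) m i = (p + ?g i) * ?r n m i"
          using True pqi rho_step_n[of "?g i" p] by (simp add: rv gd_def)
        then show "p * ?r (n + 1) m i - (?g i * ?r (n + 1) m i + (if blk ?L i \<noteq> 0 \<and> 1 \<le> loc ?L i then ?r (n + 1) m (i - 1) else 0)) =
          p * ?r n m i + (?g i * ?r n m i + (if blk ?L i \<noteq> 0 \<and> 1 \<le> loc ?L i then ?r n m (i - 1) else 0))"
          using True by (simp add: algebra_simps)
      next
        case False
        have J: "(p - kap (blk ?L i)) * (dk (loc ?L i) (rho p q (n+1) m (r0J (blk ?L i))) (kap (blk ?L i)) / fact (loc ?L i)) - (if 1 \<le> loc ?L i then dk (loc ?L i - 1) (rho p q (n+1) m (r0J (blk ?L i))) (kap (blk ?L i)) / fact (loc ?L i - 1) else 0)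
       = (p + kap (blk ?L i)) * (dk (loc ?L i) (rho p q n m (r0J (blk ?L i))) (kap (blk ?L i)) / fact (loc ?L i)) + (if 1 \<le> loc ?L i then dk (loc ?L i - 1) (rho p q n m (r0J (blk ?L i))) (kap (blk ?L i)) / fact (loc ?L i - 1) else 0)"
          by (rule J_rel_n) (use pqi False in \<open>auto simp: gd_def\<close>)
        show "p * ?r (n + 1) m i - (?g i * ?r (n + 1) m i + (if blk ?L i \<noteq> 0 \<and> 1 \<le> loc ?L i then ?r (n + 1) m (i - 1) else 0)) =
          p * ?r n m i + (?g i * ?r n m i + (if blk ?L i \<noteq> 0 \<and> 1 \<le> loc ?L i then ?r n m (i - 1) else 0))"
          unfolding rprev[OF i False] rvJ[OF False] gd_def if_not_P[OF False] by (rule lin_aux[OF J])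
      qed
    }
    {
      fix i assume i: "i < N"
      have pqi: "?g i \<noteq> p" "?g i \<noteq> -p" "?g i \<noteq> q" "?g i \<noteq> -q" using pq[OF i] by auto
      show "mvec N (\<lambda>i j. q * idm i j - \<Gamma> i j) (?r n (m + 1)) i = mvec N (\<lambda>i j. q * idm i j + \<Gamma> i j) (?r n m) i"
        unfolding mvec_pm[OF i] Gv[OF i]
      proof (cases "blk ?L i = 0")
        case True
        have "(q - ?g i) * ?r n (m+1) i = (q + ?g i) * ?r n m i"
          using True pqi rho_step_m[of "?g i" q] by (simp add: rv gd_def)
        then show "q * ?r n (m + 1) i - (?g i * ?r n (m + 1) i + (if blk ?L i \<noteq> 0 \<and> 1 \<le> loc ?L i then ?r n (m + 1) (i - 1) else 0)) =
          q * ?r n m i + (?g i * ?r n m i + (if blk ?L i \<noteq> 0 \<and> 1 \<le> loc ?L i then ?r n m (i - 1) else 0))"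
          using True by (simp add: algebra_simps)
      next
        case False
        have J: "(q - kap (blk ?L i)) * (dk (loc ?L i) (rho p q n (m+1) (r0J (blk ?L i))) (kap (blk ?L i)) / fact (loc ?L i)) - (if 1 \<le> loc ?L i then dk (loc ?L i - 1) (rho p q n (m+1) (r0J (blk ?L i))) (kap (blk ?L i)) / fact (loc ?L i - 1) else 0)
       = (q + kap (blk ?L i)) * (dk (loc ?L i) (rho p q n m (r0J (blk ?L i))) (kap (blk ?L i)) / fact (loc ?L i)) + (if 1 \<le> loc ?L i then dk (loc ?L i - 1) (rho p q n m (r0J (blk ?L i))) (kap (blk ?L i)) / fact (loc ?L i - 1) else 0)"
          by (rule J_rel_m) (use pqi False in \<open>auto simp: gd_def\<close>)
        show "q * ?r n (m + 1) i - (?g i * ?r n (m + 1) i + (if blk ?L i \<noteq> 0 \<and> 1 \<le> loc ?L i then ?r n (m + 1) (i - 1) else 0)) =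
          q * ?r n m i + (?g i * ?r n m i + (if blk ?L i \<noteq> 0 \<and> 1 \<le> loc ?L i then ?r n m (i - 1) else 0))"
          unfolding rprev[OF i False] rvJ[OF False] gd_def if_not_P[OF False] by (rule lin_aux[OF J])
      qed
    }
    {
      fix i j assume i: "i < N" and j: "j < N"
      define Fm where "Fm = Fmat p q N1 k r0D Ns kap r0J n m"
      define G0 where "G0 = Gmat N1 k Ns kap"
      define Hm where "Hm = Hmat N1 Ns c"
      define GT where "GT = (\<lambda>a b. \<Gamma> b a)"
      have Meq: "Mmat p q N1 k r0D Ns kap r0J c n m = mmul N (mmul N Fm G0) Hm"
        by (simp add: Mmat_def N_def Fm_def G0_def Hm_def Let_def)
      have FC: "\<And>a b. a < N \<Longrightarrow> b < N \<Longrightarrow> mmul N Fm \<Gamma> a b = mmul N \<Gamma> Fm a b"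
        unfolding Fm_def Fmat_BT N_def \<Gamma>_def by (rule BT_comm)
      have HC: "\<And>a b. a < N \<Longrightarrow> b < N \<Longrightarrow> mmul N Hm \<Gamma> a b = mmul N GT Hm a b"
        unfolding Hm_def GT_def N_def \<Gamma>_def by (rule H_comm)
      have GC: "\<And>a b. a < N \<Longrightarrow> b < N \<Longrightarrow> mmul N \<Gamma> G0 a b + mmul N G0 GT a b = ev N1 Ns a * ev N1 Ns b"
        unfolding G0_def GT_def \<Gamma>_def N_def by (rule G_rel) (use nz in \<open>auto simp: N_def\<close>)
      have Fe: "(\<Sum>t<N. Fm i t * ev N1 Ns t) = ?r n m i"
        using Fe_sum[of i N1 Ns] i unfolding Fm_def Fmat_BT N_def by (simp add: rv)
      have eH: "(\<Sum>l<N. ev N1 Ns l * Hm l j) = c j"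
        using eH_sum[of j N1 Ns c] j unfolding Hm_def N_def by simp
      have a1: "mmul N (mmul N (mmul N Fm G0) Hm) \<Gamma> i j = mmul N (mmul N Fm (mmul N G0 GT)) Hm i j"
      proof -
        have "mmul N (mmul N (mmul N Fm G0) Hm) \<Gamma> i j = mmul N (mmul N Fm G0) (mmul N Hm \<Gamma>) i j" by (rule mmul_assoc)
        also have "\<dots> = mmul N (mmul N Fm G0) (mmul N GT Hm) i j" by (rule mmul_cong) (use HC j in auto)
        also have "\<dots> = mmul N (mmul N Fm (mmul N G0 GT)) Hm i j" by (simp add: mmul_assoc_fun)
        finally show ?thesis .
      qed
      have a2: "mmul N \<Gamma> (mmul N (mmul N Fm G0) Hm) i j = mmul N (mmul N Fm (mmul N \<Gamma> G0)) Hm i j"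
      proof -
        have "mmul N \<Gamma> (mmul N (mmul N Fm G0) Hm) i j = mmul N (mmul N (mmul N \<Gamma> Fm) G0) Hm i j" by (simp add: mmul_assoc_fun)
        also have "\<dots> = mmul N (mmul N (mmul N Fm \<Gamma>) G0) Hm i j"
          by (rule mmul_cong, rule mmul_cong) (use FC i in auto)
        also have "\<dots> = mmul N (mmul N Fm (mmul N \<Gamma> G0)) Hm i j" by (simp add: mmul_assoc_fun)
        finally show ?thesis .
      qed
      have "mmul N (Mmat p q N1 k r0D Ns kap r0J c n m) \<Gamma> i j + mmul N \<Gamma> (Mmat p q N1 k r0D Ns kap r0J c n m) i j
          = mmul N (mmul N Fm (mmul N G0 GT)) Hm i j + mmul N (mmul N Fm (mmul N \<Gamma> G0)) Hm i j"
        unfolding Meq a1 a2 ..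
      also have "\<dots> = mmul N (\<lambda>a b. mmul N Fm (mmul N G0 GT) a b + mmul N Fm (mmul N \<Gamma> G0) a b) Hm i j"
        by (rule mmul_addL)
      also have "\<dots> = mmul N (\<lambda>a b. ?r n m a * ev N1 Ns b) Hm i j"
      proof (rule mmul_cong)
        fix l assume l: "l < N"
        have "mmul N Fm (mmul N G0 GT) i l + mmul N Fm (mmul N \<Gamma> G0) i l
            = mmul N Fm (\<lambda>a b. mmul N G0 GT a b + mmul N \<Gamma> G0 a b) i l" by (rule mmul_addR)
        also have "\<dots> = mmul N Fm (\<lambda>a b. ev N1 Ns a * ev N1 Ns b) i l"
          by (rule mmul_cong) (use GC l in \<open>auto simp: add.commute\<close>)
        also have "\<dots> = (\<Sum>t<N. Fm i t * ev N1 Ns t) * ev N1 Ns l"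
          unfolding mmul_def by (simp add: sum_distrib_right mult.assoc)
        finally show "mmul N Fm (mmul N G0 GT) i l + mmul N Fm (mmul N \<Gamma> G0) i l = ?r n m i * ev N1 Ns l"
          unfolding Fe .
      qed simp
      also have "\<dots> = ?r n m i * (\<Sum>l<N. ev N1 Ns l * Hm l j)"
        unfolding mmul_def by (simp add: sum_distrib_left mult.assoc)
      finally show "mmul N (Mmat p q N1 k r0D Ns kap r0J c n m) \<Gamma> i j + mmul N \<Gamma> (Mmat p q N1 k r0D Ns kap r0J c n m) i j
          = ?r n m i * c j" unfolding eH .
    }
  qed
  show ?thesis
  proof (intro conjI allI)
    show "sat_eqs N p q \<Gamma> c ?r (Mmat p q N1 k r0D Ns kap r0J c)" by (rule S)
  next
    fix aseq :: "nat \<Rightarrow> nat \<Rightarrow> complex"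
    have AC: "\<And>a b. a < N \<Longrightarrow> b < N \<Longrightarrow> mmul N (Amat N1 Ns aseq) \<Gamma> a b = mmul N \<Gamma> (Amat N1 Ns aseq) a b"
      unfolding Amat_BT N_def \<Gamma>_def by (rule BT_comm)
    show "sat_eqs N p q \<Gamma> c (\<lambda>n m. mvec N (Amat N1 Ns aseq) (?r n m))
           (\<lambda>n m. mmul N (Amat N1 Ns aseq) (Mmat p q N1 k r0D Ns kap r0J c n m))"
      by (rule transfer[OF S AC])
  qed
qed

end
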